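(* If $n\ge 1$ and $k\ge 2$ are integers, then the $k$-Pell graph $\Pi_{n,k}$ is a subgraph of the Fibonacci cube $\Gamma_{(2k-2)n-1}$, i.e. there is an injective map $V(\Pi_{n,k})\to V(\Gamma_{(2k-2)n-1})$ sending adjacent vertices to adjacent vertices.
   Context: For an integer $k\ge 2$, a $k$-Pell string is a finite word over the alphabet $\{0,1,\ldots,k-1,kk\}$, i.e. a word over $\{0,1,\ldots,k\}$ in which every maximal run of the letter $k$ has even length. For $n\ge 0$, the $k$-Pell graph $\Pi_{n,k}$ has as vertices all $k$-Pell strings of length $n$, and two vertices are adjacent if one is obtained from the other either by replacing a single letter $i$ by $i+1$ (or vice versa) for some $i\in\{0,1,\ldots,k-2\}$, or by replacing one factor $(k-1)(k-1)$ by $kk$ (or vice versa), in such a way that the resulting string is again a $k$-Pell string. The Fibonacci cube $\Gamma_m$ is the graph whose vertices are the binary strings of length $m$ with no two consecutive 1s, two vertices being adjacent iff they differ in exactly one coordinate. *)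

theory Defs
  imports Main
begin

(* k-Pell strings: words over {0,...,k-1,kk}, i.e. words over {0..k} whose
   maximal runs of the letter k have even length. *)
inductive pell_string :: "nat \<Rightarrow> nat list \<Rightarrow> bool" for k :: nat where
  Nil: "pell_string k []"
| Low: "i < k \<Longrightarrow> pell_string k w \<Longrightarrow> pell_string k (i # w)"
| KK: "pell_string k w \<Longrightarrow> pell_string k (k # k # w)"

definition pell_vertices :: "nat \<Rightarrow> nat \<Rightarrow> nat list set" where
  "pell_vertices n k = {w. length w = n \<and> pell_string k w}"

definition pell_step :: "nat \<Rightarrow> nat list \<Rightarrow> nat list \<Rightarrow> bool" where
  "pell_step k u v \<longleftrightarrow>
     (\<exists>xs ys i. i \<le> k - 2 \<and> u = xs @ [i] @ ys \<and> v = xs @ [Suc i] @ ys) \<or>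
     (\<exists>xs ys. u = xs @ [k - 1, k - 1] @ ys \<and> v = xs @ [k, k] @ ys)"

definition pell_adj :: "nat \<Rightarrow> nat \<Rightarrow> nat list \<Rightarrow> nat list \<Rightarrow> bool" where
  "pell_adj n k u v \<longleftrightarrow> u \<in> pell_vertices n k \<and> v \<in> pell_vertices n k \<and>
     (pell_step k u v \<or> pell_step k v u)"

definition fib_vertices :: "nat \<Rightarrow> bool list set" where
  "fib_vertices m = {w. length w = m \<and> (\<forall>i. Suc i < m \<longrightarrow> \<not> (w ! i \<and> w ! Suc i))}"

definition fib_adj :: "nat \<Rightarrow> bool list \<Rightarrow> bool list \<Rightarrow> bool" where
  "fib_adj m u v \<longleftrightarrow> u \<in> fib_vertices m \<and> v \<in> fib_vertices m \<and>
     card {i. i < m \<and> u ! i \<noteq> v ! i} = 1"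

end

theory Submission
  imports Defs
begin

definition code :: "nat \<Rightarrow> nat \<Rightarrow> bool list" where
  "code k x = map (\<lambda>j. even j \<and> j < 2 * (k - 1 - x)) [0..<2*k-2]"

definition kkb :: "nat \<Rightarrow> bool list" where
  "kkb k = map (\<lambda>j. j = 1) [0..<4*k-4]"

fun enc :: "nat \<Rightarrow> nat list \<Rightarrow> bool list" where
  "enc k [] = []"
| "enc k [x] = code k x"
| "enc k (x # y # w) = (if x = k then kkb k @ enc k w else code k x @ enc k (y # w))"

lemma enc_low: "x \<noteq> k \<Longrightarrow> enc k (x # w) = code k x @ enc k w"
  by (cases w) auto

lemma enc_kk: "enc k (k # k # w) = kkb k @ enc k w"
  by simp

lemma enc_append: "pell_string k xs \<Longrightarrow> enc k (xs @ ys) = enc k xs @ enc k ys"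
  by (induction rule: pell_string.induct) (auto simp: enc_low)

lemma enc_length: "pell_string k xs \<Longrightarrow> k \<ge> 2 \<Longrightarrow> length (enc k xs) = (2*k-2) * length xs"
proof (induction rule: pell_string.induct)
  case (KK w)
  then obtain j where "k = Suc (Suc j)" by (metis add_2_eq_Suc le_Suc_ex)
  then show ?case using KK by (simp add: kkb_def algebra_simps)
qed (auto simp: enc_low code_def)

lemma pell_split: "\<forall>xs. length xs = l \<longrightarrow> pell_string k (xs @ x # ys) \<longrightarrow> x < k \<longrightarrow> pell_string k xs \<and> pell_string k ys"
proof (induction l rule: less_induct)
  case (less l)
  show ?case
  proof (intro allI impI)
    fix xs assume l: "length xs = l" and p: "pell_string k (xs @ x # ys)" and x: "x < k"
    show "pell_string k xs \<and> pell_string k ys"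
    proof (cases xs)
      case Nil
      then show ?thesis using p x by (auto elim: pell_string.cases intro: pell_string.intros)
    next
      case (Cons a xs')
      from p[unfolded Cons] show ?thesis
      proof (cases rule: pell_string.cases)
        case Nil then show ?thesis by simp
      next
        case (Low)
        then show ?thesis using less[rule_format, of "length xs'" xs'] l Cons x
          by (auto intro: pell_string.intros)
      next
        case (KK w)
        then obtain xs'' where xs': "xs' = k # xs''" using x
          by (cases xs') auto
        then show ?thesis using KK less[rule_format, of "length xs''" xs''] l Cons x
          by (auto intro: pell_string.intros)
      qed
    qed
  qed
qed

definition nz :: "bool list \<Rightarrow> bool" where
  "nz l = (\<forall>i. Suc i < length l \<longrightarrow> \<not> (l ! i \<and> l ! Suc i))"

lemma nz_append:
  assumes "nz a" "nz b" "a \<noteq> [] \<Longrightarrow> \<not> last a"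
  shows "nz (a @ b)"
  unfolding nz_def
proof (intro allI impI)
  fix i assume i: "Suc i < length (a @ b)"
  consider "Suc i < length a" | "Suc i = length a" | "i \<ge> length a" by linarith
  then show "\<not> ((a @ b) ! i \<and> (a @ b) ! Suc i)"
  proof cases
    case 1 then show ?thesis using assms(1) by (auto simp: nz_def nth_append)
  next
    case 2 then have "a \<noteq> []" by auto
    then have "a ! i = last a" using 2 by (metis diff_Suc_1 last_conv_nth)
    then show ?thesis using 2 assms(3) \<open>a \<noteq> []\<close> by (auto simp: nth_append)
  next
    case 3 then show ?thesis using assms(2) i
      by (auto simp: nz_def nth_append Suc_diff_le)
  qed
qed

lemma nz_code: "nz (code k x)"
  by (auto simp: nz_def code_def)

lemma nz_kkb: "nz (kkb k)"
  by (auto simp: nz_def kkb_def)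

lemma last_code: "k \<ge> 2 \<Longrightarrow> \<not> last (code k x)"
  by (auto simp: code_def last_map last_upt)

lemma last_kkb: "k \<ge> 2 \<Longrightarrow> \<not> last (kkb k)"
  by (auto simp: kkb_def last_map last_upt)

lemma enc_props: "pell_string k u \<Longrightarrow> k \<ge> 2 \<Longrightarrow> nz (enc k u) \<and> (enc k u \<noteq> [] \<longrightarrow> \<not> last (enc k u))"
proof (induction rule: pell_string.induct)
  case Nil then show ?case by (simp add: nz_def)
next
  case (Low i w)
  have ne: "code k i \<noteq> []" using Low by (auto simp: code_def)
  show ?case using Low nz_append[OF nz_code, of "enc k w" k i] last_code[of k i] ne
    by (auto simp: enc_low last_append)
next
  case (KK w)
  have ne: "kkb k \<noteq> []" using KK by (auto simp: kkb_def)
  show ?case using KK nz_append[OF nz_kkb, of "enc k w" k] last_kkb[of k] ne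
    by (auto simp: last_append)
qed

lemma code_inj: "code k i = code k j \<Longrightarrow> i < k \<Longrightarrow> j < k \<Longrightarrow> i = j"
proof (rule ccontr)
  assume e: "code k i = code k j" and ij: "i < k" "j < k" "i \<noteq> j"
  define p where "p = 2 * (k - 1 - max i j)"
  have "p < 2*k-2" using ij by (auto simp: p_def)
  then have "code k i ! p = code k j ! p" using e by simp
  moreover have "code k i ! p \<noteq> code k j ! p" using ij \<open>p < 2*k-2\<close>
    by (auto simp: code_def p_def max_def)
  ultimately show False by simp
qed

lemma code1: "k \<ge> 2 \<Longrightarrow> (code k i @ X) ! Suc 0 = False"
  by (auto simp: code_def nth_append)

lemma kkb1: "k \<ge> 2 \<Longrightarrow> (kkb k @ X) ! Suc 0 = True"
  by (auto simp: kkb_def nth_append)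

lemma enc_inj: "pell_string k u \<Longrightarrow> pell_string k v \<Longrightarrow> k \<ge> 2 \<Longrightarrow> enc k u = enc k v \<Longrightarrow> u = v"
proof (induction arbitrary: v rule: pell_string.induct)
  case Nil
  then show ?case
    by (cases rule: pell_string.cases) (auto simp: enc_low code_def kkb_def)
next
  case (Low i w)
  note ik = Low.hyps(1) and IH = Low.IH
  from Low.prems(1) show ?case
  proof (cases rule: pell_string.cases)
    case Nil then show ?thesis using Low by (auto simp: enc_low code_def)
  next
    case (Low j w')
    have "code k i @ enc k w = code k j @ enc k w'" using Low Low.prems ik
      by (simp add: enc_low)
    then have "code k i = code k j \<and> enc k w = enc k w'"
      by (simp add: code_def)
    then show ?thesis using code_inj Low Low.prems ik IH by blast
  next
    case (KK w')
    have "code k i @ enc k w = kkb k @ enc k w'" using KK Low by (simp add: enc_low)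
    then have "(code k i @ enc k w) ! 1 = (kkb k @ enc k w') ! 1" by simp
    then show ?thesis using Low.prems by (simp add: code1 kkb1)
  qed
next
  case (KK w)
  note IH2 = KK.IH and pw = KK.hyps
  from KK.prems(1) show ?case
  proof (cases rule: pell_string.cases)
    case Nil then show ?thesis using KK by (auto simp: kkb_def)
  next
    case (Low j w')
    have "kkb k @ enc k w = code k j @ enc k w'" using KK Low by (simp add: enc_low)
    then have "(kkb k @ enc k w) ! 1 = (code k j @ enc k w') ! 1" by simp
    then show ?thesis using KK.prems by (simp add: code1 kkb1)
  next
    case (KK w')
    have "kkb k @ enc k w = kkb k @ enc k w'" using KK \<open>enc k (k # k # w) = enc k v\<close> by simp
    then show ?thesis using KK IH2 KK.prems by simp
  qed
qed


lemma diff_single: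
  assumes "length a = length b" "p < length a"
    "\<And>j. j < length a \<Longrightarrow> (a!j \<noteq> b!j) = (j = p)"
    "length P + p < M" "M \<le> length (P@a@S)"
  shows "{j. j < M \<and> take M (P@a@S) ! j \<noteq> take M (P@b@S) ! j} = {length P + p}"
proof -
  have "j < M \<Longrightarrow> (take M (P@a@S) ! j \<noteq> take M (P@b@S) ! j) = (j = length P + p)" for j
  proof -
    assume j: "j < M"
    then have "take M (P@a@S) ! j = (P@a@S) ! j" "take M (P@b@S) ! j = (P@b@S) ! j" by (simp_all only: nth_take)
    moreover have "((P@a@S) ! j \<noteq> (P@b@S) ! j) = (j = length P + p)"
    proof (cases "j < length P")
      case True then show ?thesis by (simp add: nth_append)
    next
      case False
      then show ?thesis using assms(1,2) assms(3)[of "j - length P"]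
        by (auto simp: nth_append)
    qed
    ultimately show ?thesis by simp
  qed
  then show ?thesis using assms(4) by auto
qed

lemma pell_tail: "pell_string k (x # ys) \<Longrightarrow> x < k \<Longrightarrow> pell_string k ys"
  by (auto elim: pell_string.cases)

lemma code_diff_arith:
  assumes "i \<le> k - 2" "k \<ge> 2"
  shows "((even j \<and> j < 2*(k-1-i)) \<noteq> (even j \<and> j < 2*(k - 1 - Suc i))) = (j = 2*(k-2-i))"
proof -
  define a where "a = k - 2 - i"
  have 1: "k-1-i = Suc a" and 2: "k - 1 - Suc i = a" using assms by (auto simp: a_def)
  have "((even j \<and> j < 2*Suc a) \<noteq> (even j \<and> j < 2*a)) = (j = 2*a)"
  proof
    assume "(even j \<and> j < 2*Suc a) \<noteq> (even j \<and> j < 2*a)"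
    then have "even j" "2*a \<le> j" "j < 2*a+2" by auto
    then show "j = 2*a" by (auto elim!: evenE)
  qed auto
  then show ?thesis using 1 2 a_def by simp
qed

lemma step_diff:
  assumes k: "k \<ge> 2" and st: "pell_step k u v" and u: "u \<in> pell_vertices n k" and v: "v \<in> pell_vertices n k"
  shows "\<exists>q. {j. j < (2*k-2)*n - 1 \<and> take ((2*k-2)*n - 1) (enc k u) ! j \<noteq> take ((2*k-2)*n - 1) (enc k v) ! j} = {q}"
proof -
  let ?M = "(2*k-2)*n - 1"
  from st show ?thesis unfolding pell_step_def
  proof (elim disjE exE conjE)
    fix xs ys i assume i: "i \<le> k - 2" and uu: "u = xs @ [i] @ ys" and vv: "v = xs @ [Suc i] @ ys"
    have pu: "pell_string k u" and lu: "length u = n" using u by (auto simp: pell_vertices_def)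
    have ik: "i < k" using i k by arith
    have pxs: "pell_string k xs" and pys: "pell_string k ys"
      using pell_split[where l="length xs" and x=i and ys=ys and k=k] pu uu ik by auto
    have eu: "enc k u = enc k xs @ code k i @ enc k ys"
      using uu pxs ik by (simp add: enc_append enc_low)
    have ev: "enc k v = enc k xs @ code k (Suc i) @ enc k ys"
      using vv pxs ik i k by (simp add: enc_append enc_low)
    have lc: "length (code k x) = 2*k-2" for x by (simp add: code_def)
    have dj: "j < length (code k i) \<Longrightarrow> (code k i ! j \<noteq> code k (Suc i) ! j) = (j = 2*(k-2-i))" for j
      using i k code_diff_arith[of i k j] by (simp add: code_def)
    have lx: "length (enc k xs) = (2*k-2) * length xs" using enc_length[OF pxs k] .
    have ly: "length (enc k ys) = (2*k-2) * length ys" using enc_length[OF pys k] .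
    have nn: "length xs + 1 + length ys = n" using lu uu by simp
    have b1: "(2*k-2) * length xs + (2*k-2) \<le> (2*k-2) * n"
    proof -
      have "(2*k-2) * length xs + (2*k-2) = (2*k-2) * (length xs + 1)" by simp
      also have "\<dots> \<le> (2*k-2) * n" using nn by (intro mult_le_mono2) simp
      finally show ?thesis .
    qed
    have "length (enc k xs) + 2*(k-2-i) < ?M" using lx b1 i k by simp
    moreover have "?M \<le> length (enc k xs @ code k i @ enc k ys)"
    proof -
      have "(2*k-2)*n = (2*k-2) * length xs + (2*k-2) + (2*k-2) * length ys"
        using nn[symmetric] by (simp only: add_mult_distrib2 mult_1_right)
      then show ?thesis using lx ly lc by (simp add: add.assoc)
    qed
    moreover have "length (code k i) = length (code k (Suc i))" by (simp only: lc)
    moreover have "2*(k-2-i) < length (code k i)" using k by (simp add: lc)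
    ultimately have D: "{j. j < ?M \<and> take ?M (enc k xs @ code k i @ enc k ys) ! j \<noteq> take ?M (enc k xs @ code k (Suc i) @ enc k ys) ! j} = {length (enc k xs) + 2*(k-2-i)}"
      using diff_single[of "code k i" "code k (Suc i)" "2*(k-2-i)" "enc k xs" ?M "enc k ys"] dj by blast
    show ?thesis unfolding eu ev by (rule exI, rule D)
  next
    fix xs ys assume uu: "u = xs @ [k-1, k-1] @ ys" and vv: "v = xs @ [k, k] @ ys"
    have pu: "pell_string k u" and lu: "length u = n" using u by (auto simp: pell_vertices_def)
    have ik: "k - 1 < k" using k by arith
    have pxs: "pell_string k xs" and pys': "pell_string k ((k-1) # ys)"
      using pell_split[where l="length xs" and x="k-1" and ys="(k-1) # ys" and k=k] pu uu ik by auto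
    have pys: "pell_string k ys" using pell_tail[OF pys' ik] .
    have eu: "enc k u = enc k xs @ (code k (k-1) @ code k (k-1)) @ enc k ys"
      using uu pxs ik by (simp add: enc_append enc_low)
    have ev: "enc k v = enc k xs @ kkb k @ enc k ys"
      using vv pxs by (simp add: enc_append)
    have la: "length (code k (k-1) @ code k (k-1)) = length (kkb k)" using k by (simp add: code_def kkb_def)
    have la2: "length (kkb k) = 4*k-4" by (simp add: kkb_def)
    have dj: "j < length (code k (k-1) @ code k (k-1)) \<Longrightarrow> ((code k (k-1) @ code k (k-1)) ! j \<noteq> kkb k ! j) = (j = 1)" for j
      using k la la2 by (auto simp: code_def kkb_def nth_append)
    have lx: "length (enc k xs) = (2*k-2) * length xs" using enc_length[OF pxs k] .
    have ly: "length (enc k ys) = (2*k-2) * length ys" using enc_length[OF pys k] .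
    have nn: "length xs + 2 + length ys = n" using lu uu by simp
    have m4: "(2*k-2)*2 = 4*k-4" by simp
    have b1: "(2*k-2) * length xs + (4*k-4) \<le> (2*k-2) * n"
    proof -
      have "(2*k-2) * length xs + (4*k-4) = (2*k-2) * (length xs + 2)" by (metis add_mult_distrib2 m4)
      also have "\<dots> \<le> (2*k-2) * n" using nn by (intro mult_le_mono2) simp
      finally show ?thesis .
    qed
    have "length (enc k xs) + 1 < ?M" using lx b1 k by simp
    moreover have "?M \<le> length (enc k xs @ (code k (k-1) @ code k (k-1)) @ enc k ys)"
    proof -
      have "(2*k-2)*n = (2*k-2) * length xs + (2*k-2)*2 + (2*k-2) * length ys"
        using nn[symmetric] by (simp only: add_mult_distrib2)
      then have "(2*k-2)*n = (2*k-2) * length xs + (4*k-4) + (2*k-2) * length ys"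
        by (simp only: m4)
      moreover have "length (enc k xs @ (code k (k-1) @ code k (k-1)) @ enc k ys) = length (enc k xs) + length (code k (k-1) @ code k (k-1)) + length (enc k ys)"
        by (simp only: length_append add.assoc)
      ultimately have "length (enc k xs @ (code k (k-1) @ code k (k-1)) @ enc k ys) = (2*k-2)*n"
        by (simp only: lx ly la la2)
      then show ?thesis by (simp only: diff_le_self)
    qed
    moreover have "1 < length (code k (k-1) @ code k (k-1))" using k la la2 by simp
    ultimately have D: "{j. j < ?M \<and> take ?M (enc k xs @ (code k (k-1) @ code k (k-1)) @ enc k ys) ! j \<noteq> take ?M (enc k xs @ kkb k @ enc k ys) ! j} = {length (enc k xs) + 1}"
      using diff_single[of "code k (k-1) @ code k (k-1)" "kkb k" 1 "enc k xs" ?M "enc k ys"] la dj by blast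
    show ?thesis unfolding eu ev by (rule exI, rule D)
  qed
qed

theorem proposition5p8:
  fixes n k :: nat
  assumes "n \<ge> 1" and "k \<ge> 2"
  shows "\<exists>f. inj_on f (pell_vertices n k) \<and>
           f ` pell_vertices n k \<subseteq> fib_vertices ((2 * k - 2) * n - 1) \<and>
           (\<forall>u v. pell_adj n k u v \<longrightarrow> fib_adj ((2 * k - 2) * n - 1) (f u) (f v))"
proof -
  let ?M = "(2 * k - 2) * n - 1"
  define f where "f u = take ?M (enc k u)" for u
  have len: "u \<in> pell_vertices n k \<Longrightarrow> length (enc k u) = ?M + 1" for u
  proof -
    assume "u \<in> pell_vertices n k"
    then have "length (enc k u) = (2*k-2) * n" using enc_length[of k u] assms(2) unfolding pell_vertices_def by simp
    moreover have "(2*k-2) * n \<ge> 1" using assms by simp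
    ultimately show ?thesis by linarith
  qed
  have ne: "u \<in> pell_vertices n k \<Longrightarrow> enc k u \<noteq> []" for u using len[of u] by auto
  have lastf: "u \<in> pell_vertices n k \<Longrightarrow> \<not> last (enc k u)" for u
    using enc_props[of k u] ne[of u] assms by (auto simp: pell_vertices_def)
  have recon: "u \<in> pell_vertices n k \<Longrightarrow> enc k u = f u @ [False]" for u
  proof -
    assume u: "u \<in> pell_vertices n k"
    have "f u = butlast (enc k u)" using len[OF u] by (simp add: f_def butlast_conv_take)
    then show ?thesis using append_butlast_last_id[OF ne[OF u]] lastf[OF u] by simp
  qed
  have "inj_on f (pell_vertices n k)"
  proof (rule inj_onI)
    fix u v assume u: "u \<in> pell_vertices n k" and v: "v \<in> pell_vertices n k" and e: "f u = f v"
    then have "enc k u = enc k v" using recon by simp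
    moreover have "pell_string k u" "pell_string k v" using u v unfolding pell_vertices_def by simp_all
    ultimately show "u = v" using enc_inj assms(2) by blast
  qed
  moreover have fv: "f ` pell_vertices n k \<subseteq> fib_vertices ?M"
  proof
    fix w assume "w \<in> f ` pell_vertices n k"
    then obtain u where u: "u \<in> pell_vertices n k" and w: "w = f u" by auto
    have "nz (enc k u)" using enc_props[of k u] u assms by (auto simp: pell_vertices_def)
    then have "nz w" using w len[OF u] by (auto simp: nz_def f_def)
    moreover have "length w = ?M" using w len[OF u] by (simp add: f_def)
    ultimately show "w \<in> fib_vertices ?M" by (auto simp: nz_def fib_vertices_def)
  qed
  moreover have "\<forall>u v. pell_adj n k u v \<longrightarrow> fib_adj ?M (f u) (f v)"
  proof (intro allI impI)
    fix u v assume a: "pell_adj n k u v"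
    then have u: "u \<in> pell_vertices n k" and v: "v \<in> pell_vertices n k"
      by (auto simp: pell_adj_def)
    have "\<exists>q. {j. j < ?M \<and> f u ! j \<noteq> f v ! j} = {q}"
    proof (cases "pell_step k u v")
      case True then show ?thesis using step_diff[OF assms(2) True u v] by (simp add: f_def)
    next
      case False
      then have "pell_step k v u" using a by (auto simp: pell_adj_def)
      then obtain q where "{j. j < ?M \<and> f v ! j \<noteq> f u ! j} = {q}"
        using step_diff[OF assms(2) _ v u] by (auto simp: f_def)
      moreover have "{j. j < ?M \<and> f u ! j \<noteq> f v ! j} = {j. j < ?M \<and> f v ! j \<noteq> f u ! j}" by blast
      ultimately have "{j. j < ?M \<and> f u ! j \<noteq> f v ! j} = {q}" by simp
      then show ?thesis by blast
    qed
    then obtain q where "{j. j < ?M \<and> f u ! j \<noteq> f v ! j} = {q}" by blast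
    then have c: "card {j. j < ?M \<and> f u ! j \<noteq> f v ! j} = 1" by (simp only: card.insert card.empty) simp
    have "f u \<in> fib_vertices ?M" "f v \<in> fib_vertices ?M" using fv u v by (blast, blast)
    then show "fib_adj ?M (f u) (f v)" using c unfolding fib_adj_def by (intro conjI)
  qed
  ultimately show ?thesis by blast
qed

end
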